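(* Let $d\ge1$, $a$, $b$ be integers and $x_0$ a real number. If for every $x\le x_0$ $$\pi(x;d,a)\ge\pi(x;d,b)\qquad\text{and}\qquad\sum_{\substack{1<p^r\le x\\ p\equiv a\ (\mathrm{mod}\ d)}}\log p\ge\sum_{\substack{1<p^r\le x\\ p\equiv b\ (\mathrm{mod}\ d)}}\log p,$$ then $\lambda_{d,a}(x)\ge\lambda_{d,b}(x)$ for every $x\le x_0$.
   Context: $p$ runs over primes and $r$ over positive integers. $\pi(x;d,a)$ is the number of primes $p\le x$ with $p\equiv a\pmod d$. Let $S_{d,a}$ be the set of positive integers all of whose prime divisors $p$ satisfy $p\equiv a\pmod d$ (including $1$), and $\lambda_{d,a}(x)=\sum_{n\le x,\ n\in S_{d,a}}\log n$ (in the paper $\lambda_{g_{d,a}}(x)$, with $g_{d,a}$ the indicator of $S_{d,a}$). *)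

theory Defs
  imports "HOL-Analysis.Analysis" "HOL-Number_Theory.Number_Theory"
begin

definition prime_count_ap :: "int \<Rightarrow> int \<Rightarrow> real \<Rightarrow> nat" where
  "prime_count_ap d a x = card {p::nat. prime p \<and> real p \<le> x \<and> [int p = a] (mod d)}"

definition psi_ap :: "int \<Rightarrow> int \<Rightarrow> real \<Rightarrow> real" where
  "psi_ap d a x = (\<Sum>(p, r) \<in> {(p::nat, r::nat). prime p \<and> r \<ge> 1 \<and> real (p ^ r) \<le> x
        \<and> [int p = a] (mod d)}. ln (real p))"

definition S_ap :: "int \<Rightarrow> int \<Rightarrow> nat set" where
  "S_ap d a = {n::nat. n \<ge> 1 \<and> (\<forall>p. prime p \<longrightarrow> p dvd n \<longrightarrow> [int p = a] (mod d))}"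

definition lambda_ap :: "int \<Rightarrow> int \<Rightarrow> real \<Rightarrow> real" where
  "lambda_ap d a x = (\<Sum>n \<in> {n. n \<in> S_ap d a \<and> real n \<le> x}. ln (real n))"

end

theory Submission
  imports Defs
begin

lemma greedy_inj:
  fixes B P :: "nat set"
  assumes "finite B" "\<forall>z\<in>B. card {q\<in>B. q \<le> z} \<le> card {p\<in>P. p \<le> z}"
  shows "\<exists>f. inj_on f B \<and> f ` B \<subseteq> P \<and> (\<forall>q\<in>B. f q \<le> q)"
  using assms
proof (induction B rule: finite_psubset_induct)
  case (psubset B)
  show ?case
  proof (cases "B = {}")
    case True then show ?thesis by auto
  next
    case False
    define m where "m = Max B"
    have mB: "m \<in> B" using False psubset.hyps m_def by auto
    have mmax: "\<And>q. q \<in> B \<Longrightarrow> q \<le> m" using psubset.hyps m_def by auto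
    define B' where "B' = B - {m}"
    have sub: "B' \<subset> B" using mB B'_def by auto
    have "\<forall>z\<in>B'. card {q\<in>B'. q \<le> z} \<le> card {p\<in>P. p \<le> z}"
    proof
      fix z assume z: "z \<in> B'"
      then have "z < m" using mmax B'_def by fastforce
      then have "{q\<in>B'. q \<le> z} = {q\<in>B. q \<le> z}" using B'_def by auto
      then show "card {q\<in>B'. q \<le> z} \<le> card {p\<in>P. p \<le> z}" using psubset.prems z B'_def by auto
    qed
    then obtain f where f: "inj_on f B'" "f ` B' \<subseteq> P" "\<forall>q\<in>B'. f q \<le> q"
      using psubset.IH[OF sub] by blast
    define A where "A = {p\<in>P. p \<le> m}"
    have finA: "finite A" unfolding A_def by (rule finite_subset[of _ "{..m}"]) auto
    have "{q\<in>B. q \<le> m} = B" using mmax by auto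
    then have cA: "card B \<le> card A" using psubset.prems mB unfolding A_def by force
    have fB'A: "f ` B' \<subseteq> A"
    proof (rule subsetI)
      fix y assume "y \<in> f ` B'"
      then obtain q where q: "q \<in> B'" "y = f q" by blast
      then have "y \<le> m" using f(3) mmax B'_def by (meson DiffD1 le_trans)
      moreover have "y \<in> P" using q f(2) by blast
      ultimately show "y \<in> A" unfolding A_def by blast
    qed
    have "card (f ` B') = card B'" using f(1) by (simp add: card_image)
    also have "\<dots> < card B" unfolding B'_def using psubset.hyps(1) mB by (rule card_Diff1_less)
    finally have lt: "card (f ` B') < card A" using cA by linarith
    have finfB: "finite (f ` B')" using psubset.hyps(1) B'_def by simp
    have "\<not> A \<subseteq> f ` B'"
    proof
      assume "A \<subseteq> f ` B'"
      then have "card A \<le> card (f ` B')" by (rule card_mono[OF finfB])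
      then show False using lt by linarith
    qed
    then obtain p where p: "p \<in> A" "p \<notin> f ` B'" by blast
    define g where "g = f(m := p)"
    have "inj_on g B'" unfolding g_def using f(1) p(2) by (rule inj_on_fun_updI)
    moreover have "g ` B' = f ` B'" unfolding g_def B'_def by auto
    moreover have "g m \<notin> g ` B'" using p(2) calculation(2) g_def by simp
    ultimately have "inj_on g (insert m B')" using inj_on_insert[of g m B'] by (metis Diff_empty Diff_insert0 insert_absorb)
    moreover have "insert m B' = B" using mB B'_def by auto
    ultimately have "inj_on g B" by simp
    moreover have "g ` B \<subseteq> P" using f(2) p(1) A_def g_def B'_def by auto
    moreover have "\<forall>q\<in>B. g q \<le> q" using f(3) p(1) A_def g_def B'_def by auto
    ultimately show ?thesis by blast
  qed
qed

lemma fin_real_le: "finite {n::nat. real n \<le> y}"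
  by (rule finite_subset[of _ "{..nat \<lfloor>y\<rfloor>}"]) (auto intro: le_nat_floor)

lemma image_mset_inj_eq:
  assumes "image_mset f A = image_mset f C" "inj_on f (set_mset A \<union> set_mset C)"
  shows "A = C"
proof -
  have "image_mset f A = image_mset f C + {#}" using assms(1) by simp
  then obtain C' where "A = C + C'" "{#} = image_mset f C'"
    using image_mset_eq_image_mset_plusD[of f A C "{#}"] assms(2) by blast
  then show ?thesis by simp
qed

lemma prod_mset_image_le:
  fixes f :: "nat \<Rightarrow> nat"
  shows "(\<forall>q\<in>#M. f q \<le> q) \<Longrightarrow> prod_mset (image_mset f M) \<le> prod_mset M"
  by (induction M) (auto intro: mult_le_mono)

lemma count_le:
  fixes d a b :: int and x0 y :: real
  assumes hp: "\<And>x. x \<le> x0 \<Longrightarrow> prime_count_ap d a x \<ge> prime_count_ap d b x" and y: "y \<le> x0"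
  shows "card {n. n \<in> S_ap d b \<and> real n \<le> y} \<le> card {n. n \<in> S_ap d a \<and> real n \<le> y}"
proof -
  define B where "B = {q::nat. prime q \<and> real q \<le> x0 \<and> [int q = b] (mod d)}"
  define P where "P = {p::nat. prime p \<and> [int p = a] (mod d)}"
  have finB: "finite B" unfolding B_def by (rule finite_subset[OF _ fin_real_le[of x0]]) auto
  have cond: "\<forall>z\<in>B. card {q\<in>B. q \<le> z} \<le> card {p\<in>P. p \<le> z}"
  proof
    fix z assume z: "z \<in> B"
    then have zx: "real z \<le> x0" unfolding B_def by auto
    have e1: "{q\<in>B. q \<le> z} = {p. prime p \<and> real p \<le> real z \<and> [int p = b] (mod d)}"
      unfolding B_def using zx by auto
    have e2: "{q\<in>P. q \<le> z} = {p. prime p \<and> real p \<le> real z \<and> [int p = a] (mod d)}"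
      unfolding P_def by auto
    show "card {q\<in>B. q \<le> z} \<le> card {p\<in>P. p \<le> z}"
      using hp[OF zx] unfolding e1 e2 prime_count_ap_def by simp
  qed
  obtain f where f: "inj_on f B" "f ` B \<subseteq> P" "\<forall>q\<in>B. f q \<le> q"
    using greedy_inj[OF finB cond] by blast
  define \<phi> where "\<phi> n = prod_mset (image_mset f (prime_factorization n))" for n
  define Kb where "Kb = {n. n \<in> S_ap d b \<and> real n \<le> y}"
  define Ka where "Ka = {n. n \<in> S_ap d a \<and> real n \<le> y}"
  have pfB: "set_mset (prime_factorization n) \<subseteq> B" if n: "n \<in> Kb" for n
  proof
    fix q assume q: "q \<in> set_mset (prime_factorization n)"
    have n1: "n \<ge> 1" and nS: "\<forall>p. prime p \<longrightarrow> p dvd n \<longrightarrow> [int p = b] (mod d)" and ny: "real n \<le> y"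
      using n unfolding Kb_def S_ap_def by auto
    have qp: "prime q" "q dvd n" using q by auto
    then have "q \<le> n" using n1 by (intro dvd_imp_le) auto
    then have "real q \<le> x0" using ny y by linarith
    then show "q \<in> B" unfolding B_def using qp nS by auto
  qed
  have pfphi: "prime_factorization (\<phi> n) = image_mset f (prime_factorization n)" if n: "n \<in> Kb" for n
  proof -
    have "\<And>p. p \<in># image_mset f (prime_factorization n) \<Longrightarrow> prime p"
      using pfB[OF n] f(2) unfolding P_def by auto
    then show ?thesis unfolding \<phi>_def by (rule prime_factorization_prod_mset_primes)
  qed
  have phiKa: "\<phi> n \<in> Ka" if n: "n \<in> Kb" for n
  proof -
    have n1: "n \<ge> 1" and ny: "real n \<le> y" using n unfolding Kb_def S_ap_def by auto
    have nz: "\<phi> n \<noteq> 0"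
    proof
      assume "\<phi> n = 0"
      then have "image_mset f (prime_factorization n) = {#}" using pfphi[OF n] by simp
      then have "prime_factorization n = {#}" by simp
      then have "\<phi> n = 1" unfolding \<phi>_def by simp
      then show False using \<open>\<phi> n = 0\<close> by simp
    qed
    have "\<phi> n \<le> prod_mset (prime_factorization n)" unfolding \<phi>_def
      using pfB[OF n] f(3) by (intro prod_mset_image_le) auto
    also have "\<dots> = n" using n1 by simp
    finally have le: "\<phi> n \<le> n" .
    have S: "[int p = a] (mod d)" if p: "prime p" "p dvd \<phi> n" for p
    proof -
      have "p \<in> prime_factors (\<phi> n)" using p nz by (simp add: in_prime_factors_iff)
      then have "p \<in># image_mset f (prime_factorization n)" using pfphi[OF n] by simp
      then obtain q where "q \<in># prime_factorization n" "p = f q" by auto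
      then have "p \<in> P" using pfB[OF n] f(2) by auto
      then show ?thesis unfolding P_def by simp
    qed
    show ?thesis unfolding Ka_def S_ap_def using nz le ny S by auto
  qed
  have inj: "inj_on \<phi> Kb"
  proof (rule inj_onI)
    fix n m assume n: "n \<in> Kb" and m: "m \<in> Kb" and e: "\<phi> n = \<phi> m"
    then have "image_mset f (prime_factorization n) = image_mset f (prime_factorization m)"
      using pfphi by metis
    moreover have "inj_on f (set_mset (prime_factorization n) \<union> set_mset (prime_factorization m))"
      using inj_on_subset[OF f(1)] pfB[OF n] pfB[OF m] by (metis Un_subset_iff)
    ultimately have "prime_factorization n = prime_factorization m" by (rule image_mset_inj_eq)
    moreover have "n \<ge> 1" "m \<ge> 1" using n m unfolding Kb_def S_ap_def by auto
    ultimately show "n = m"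
      by (metis prod_mset_prime_factorization_nat less_le_trans zero_less_one)
  qed
  have "card Kb \<le> card Ka"
    using inj phiKa by (intro card_inj_on_le[of \<phi>]) (auto simp: Ka_def intro: finite_subset[OF _ fin_real_le[of y]])
  then show ?thesis unfolding Ka_def Kb_def .
qed

definition Tset :: "int \<Rightarrow> int \<Rightarrow> real \<Rightarrow> (nat \<times> nat) set" where
  "Tset d A x = {(p, r). prime p \<and> r \<ge> 1 \<and> real (p ^ r) \<le> x \<and> [int p = A] (mod d)}"

definition Kset :: "int \<Rightarrow> int \<Rightarrow> real \<Rightarrow> nat set" where
  "Kset d B y = {n. n \<in> S_ap d B \<and> real n \<le> y}"

definition Eset :: "int \<Rightarrow> int \<Rightarrow> int \<Rightarrow> real \<Rightarrow> ((nat \<times> nat) \<times> nat) set" where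
  "Eset d A B x = {z. prime (fst (fst z)) \<and> snd (fst z) \<ge> 1 \<and> [int (fst (fst z)) = A] (mod d)
     \<and> snd z \<in> S_ap d B \<and> real (fst (fst z) ^ snd (fst z) * snd z) \<le> x}"

definition Dset :: "nat \<Rightarrow> (nat \<times> nat) set" where
  "Dset n = {pr. prime (fst pr) \<and> snd pr \<ge> 1 \<and> fst pr ^ snd pr dvd n}"

definition Fsum :: "int \<Rightarrow> int \<Rightarrow> int \<Rightarrow> real \<Rightarrow> real" where
  "Fsum d A B x = (\<Sum>z\<in>Eset d A B x. ln (real (fst (fst z))))"

lemma pow_bounds:
  fixes p r :: nat assumes "prime p" "r \<ge> 1"
  shows "p \<le> p ^ r" "r \<le> p ^ r" "p ^ r \<ge> 1"
proof -
  have p2: "p \<ge> 2" using assms prime_ge_2_nat by blast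
  show "p \<le> p ^ r" using p2 assms(2) by (metis power_one_right power_increasing le_trans one_le_numeral)
  have "r < 2 ^ r" by (rule less_exp)
  also have "\<dots> \<le> p ^ r" using p2 by (rule power_mono) simp
  finally show "r \<le> p ^ r" by simp
  show "p ^ r \<ge> 1" using p2 by simp
qed

lemma S_pos: "k \<in> S_ap d B \<Longrightarrow> k \<ge> 1" unfolding S_ap_def by auto

lemma finE: "finite (Eset d A B x)"
proof (rule finite_subset)
  let ?N = "nat \<lfloor>x\<rfloor>"
  show "Eset d A B x \<subseteq> ({..?N} \<times> {..?N}) \<times> {..?N}"
  proof
    fix z assume z: "z \<in> Eset d A B x"
    obtain p r k where zz: "z = ((p, r), k)" by (metis prod.collapse)
    have h: "prime p" "r \<ge> 1" "k \<ge> 1" "real (p ^ r * k) \<le> x"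
      using z S_pos unfolding Eset_def zz by auto
    have m: "p ^ r * k \<le> ?N" using h(4) by (rule le_nat_floor)
    have "p ^ r \<le> p ^ r * k" using h(3) by simp
    then have pr: "p ^ r \<le> ?N" using m by linarith
    have "k \<le> p ^ r * k" using pow_bounds(3)[OF h(1,2)] by simp
    then have "k \<le> ?N" using m by linarith
    moreover have "p \<le> ?N" "r \<le> ?N" using pow_bounds(1,2)[OF h(1,2)] pr by linarith+
    ultimately show "z \<in> ({..?N} \<times> {..?N}) \<times> {..?N}" unfolding zz by auto
  qed
qed simp

lemma finT: "finite (Tset d A x)"
proof (rule finite_subset)
  let ?N = "nat \<lfloor>x\<rfloor>"
  show "Tset d A x \<subseteq> {..?N} \<times> {..?N}"
  proof
    fix z assume z: "z \<in> Tset d A x"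
    obtain p r where zz: "z = (p, r)" by (metis prod.collapse)
    have h: "prime p" "r \<ge> 1" "real (p ^ r) \<le> x"
      using z unfolding Tset_def zz by auto
    have m: "p ^ r \<le> ?N" using h(3) by (rule le_nat_floor)
    then show "z \<in> {..?N} \<times> {..?N}"
      using pow_bounds[OF h(1,2)] unfolding zz by auto
  qed
qed simp

lemma finK: "finite (Kset d B y)"
  unfolding Kset_def by (rule finite_subset[OF _ fin_real_le[of y]]) auto

lemma Fsum_T: "Fsum d A B x = (\<Sum>pr\<in>Tset d A x. ln (real (fst pr)) * real (card (Kset d B (x / real (fst pr ^ snd pr)))))"
proof -
  have E: "Eset d A B x = Sigma (Tset d A x) (\<lambda>pr. Kset d B (x / real (fst pr ^ snd pr)))"
  proof (rule equalityI; rule subsetI)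
    fix z assume z: "z \<in> Eset d A B x"
    obtain p r k where zz: "z = ((p, r), k)" by (metis prod.collapse)
    have h: "prime p" "r \<ge> 1" "k \<ge> 1" "real (p ^ r * k) \<le> x" "[int p = A] (mod d)" "k \<in> S_ap d B"
      using z S_pos unfolding Eset_def zz by auto
    have pos: "real (p ^ r) > 0" using prime_gt_0_nat[OF h(1)] by simp
    have "p ^ r \<le> p ^ r * k" using h(3) by simp
    then have "real (p ^ r) \<le> real (p ^ r * k)" by (rule of_nat_mono)
    then have "real (p ^ r) \<le> x" using h(4) by linarith
    moreover have "real k \<le> x / real (p ^ r)" using h(4) pos by (simp add: pos_le_divide_eq mult.commute)
    ultimately show "z \<in> Sigma (Tset d A x) (\<lambda>pr. Kset d B (x / real (fst pr ^ snd pr)))"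
      unfolding zz Tset_def Kset_def using h by auto
  next
    fix z assume z: "z \<in> Sigma (Tset d A x) (\<lambda>pr. Kset d B (x / real (fst pr ^ snd pr)))"
    obtain p r k where zz: "z = ((p, r), k)" by (metis prod.collapse)
    have h: "prime p" "r \<ge> 1" "[int p = A] (mod d)" "k \<in> S_ap d B" "real k \<le> x / real (p ^ r)"
      using z unfolding Tset_def Kset_def zz by auto
    have pos: "real (p ^ r) > 0" using prime_gt_0_nat[OF h(1)] by simp
    have "real (p ^ r * k) \<le> x" using h(5) pos by (simp add: pos_le_divide_eq mult.commute)
    then show "z \<in> Eset d A B x" unfolding zz Eset_def using h by auto
  qed
  have "Fsum d A B x = (\<Sum>pr\<in>Tset d A x. \<Sum>k\<in>Kset d B (x / real (fst pr ^ snd pr)). ln (real (fst pr)))"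
    unfolding Fsum_def E by (subst sum.Sigma[OF finT]) (auto simp: finK case_prod_beta)
  then show ?thesis by (simp add: mult.commute)
qed

lemma psi_eq: "psi_ap d A y = (\<Sum>pr\<in>Tset d A y. ln (real (fst pr)))"
  unfolding psi_ap_def Tset_def by (simp add: case_prod_beta)

lemma Fsum_K: "Fsum d A B x = (\<Sum>k\<in>Kset d B x. psi_ap d A (x / real k))"
proof -
  have E: "Eset d A B x = (\<lambda>(k, pr). (pr, k)) ` Sigma (Kset d B x) (\<lambda>k. Tset d A (x / real k))"
  proof (rule equalityI; rule subsetI)
    fix z assume z: "z \<in> Eset d A B x"
    obtain p r k where zz: "z = ((p, r), k)" by (metis prod.collapse)
    have h: "prime p" "r \<ge> 1" "k \<ge> 1" "real (p ^ r * k) \<le> x" "[int p = A] (mod d)" "k \<in> S_ap d B"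
      using z S_pos unfolding Eset_def zz by auto
    have pos: "real k > 0" using h(3) by simp
    have "k \<le> p ^ r * k" using pow_bounds(3)[OF h(1,2)] by simp
    then have "real k \<le> real (p ^ r * k)" by (rule of_nat_mono)
    then have "real k \<le> x" using h(4) by linarith
    moreover have "real (p ^ r) \<le> x / real k" using h(4) pos by (simp add: pos_le_divide_eq)
    ultimately have "(k, (p, r)) \<in> Sigma (Kset d B x) (\<lambda>k. Tset d A (x / real k))"
      unfolding Tset_def Kset_def using h by auto
    then show "z \<in> (\<lambda>(k, pr). (pr, k)) ` Sigma (Kset d B x) (\<lambda>k. Tset d A (x / real k))"
      unfolding zz by force
  next
    fix z assume z: "z \<in> (\<lambda>(k, pr). (pr, k)) ` Sigma (Kset d B x) (\<lambda>k. Tset d A (x / real k))"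
    then obtain p r k where zz: "z = ((p, r), k)" and
      w: "(k, (p, r)) \<in> Sigma (Kset d B x) (\<lambda>k. Tset d A (x / real k))" by force
    have h: "prime p" "r \<ge> 1" "[int p = A] (mod d)" "k \<in> S_ap d B" "real (p ^ r) \<le> x / real k"
      using w unfolding Tset_def Kset_def by auto
    have pos: "real k > 0" using S_pos[OF h(4)] by simp
    have "real (p ^ r * k) \<le> x" using h(5) pos by (simp add: pos_le_divide_eq)
    then show "z \<in> Eset d A B x" unfolding zz Eset_def using h by auto
  qed
  have inj: "inj_on (\<lambda>(k, pr). (pr, k)) (Sigma (Kset d B x) (\<lambda>k. Tset d A (x / real k)))"
    by (rule inj_onI) auto
  have "Fsum d A B x = (\<Sum>w\<in>Sigma (Kset d B x) (\<lambda>k. Tset d A (x / real k)). ln (real (fst (snd w))))"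
    unfolding Fsum_def E by (subst sum.reindex[OF inj]) (simp add: case_prod_beta)
  also have "\<dots> = (\<Sum>k\<in>Kset d B x. \<Sum>pr\<in>Tset d A (x / real k). ln (real (fst pr)))"
    by (subst sum.Sigma[OF finK]) (auto simp: finT case_prod_beta)
  finally show ?thesis by (simp add: psi_eq)
qed

lemma finD: "n > 0 \<Longrightarrow> finite (Dset n)"
proof (rule finite_subset[of _ "{..n} \<times> {..n}"])
  assume n: "n > 0"
  show "Dset n \<subseteq> {..n} \<times> {..n}"
  proof
    fix z assume z: "z \<in> Dset n"
    obtain p r where zz: "z = (p, r)" by (metis prod.collapse)
    have h: "prime p" "r \<ge> 1" "p ^ r dvd n" using z unfolding Dset_def zz by auto
    have "p ^ r \<le> n" using h(3) n by (rule dvd_imp_le)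
    then show "z \<in> {..n} \<times> {..n}" using pow_bounds(1,2)[OF h(1,2)] unfolding zz by auto
  qed
qed simp

lemma ln_decomp:
  assumes n: "n > 0"
  shows "ln (real n) = (\<Sum>pr\<in>Dset n. ln (real (fst pr)))"
proof -
  have D: "Dset n = Sigma (prime_factors n) (\<lambda>p. {1..multiplicity p n})"
  proof (rule equalityI; rule subsetI)
    fix z assume z: "z \<in> Dset n"
    obtain p r where zz: "z = (p, r)" by (metis prod.collapse)
    have h: "prime p" "r \<ge> 1" "p ^ r dvd n" using z unfolding Dset_def zz by auto
    have "p dvd p ^ r" using h(2) by (simp add: dvd_power)
    then have "p dvd n" using h(3) by (rule dvd_trans)
    then have "p \<in> prime_factors n" using h(1) n by (simp add: in_prime_factors_iff)
    moreover have "r \<le> multiplicity p n"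
      using power_dvd_iff_le_multiplicity[of n p r] n prime_gt_1_nat[OF h(1)] h(3) by simp
    ultimately show "z \<in> Sigma (prime_factors n) (\<lambda>p. {1..multiplicity p n})" using h unfolding zz by auto
  next
    fix z assume z: "z \<in> Sigma (prime_factors n) (\<lambda>p. {1..multiplicity p n})"
    obtain p r where zz: "z = (p, r)" by (metis prod.collapse)
    have h: "p \<in> prime_factors n" "1 \<le> r" "r \<le> multiplicity p n" using z unfolding zz by auto
    have "prime p" using h(1) by (simp add: in_prime_factors_iff)
    moreover have "p ^ r dvd n"
      using power_dvd_iff_le_multiplicity[of n p r] n prime_gt_1_nat[OF \<open>prime p\<close>] h(3) by simp
    ultimately show "z \<in> Dset n" unfolding Dset_def zz using h by auto
  qed
  have "(\<Sum>pr\<in>Dset n. ln (real (fst pr))) = (\<Sum>p\<in>prime_factors n. \<Sum>r\<in>{1..multiplicity p n}. ln (real p))"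
    unfolding D by (subst sum.Sigma) (auto simp: case_prod_beta)
  also have "\<dots> = (\<Sum>p\<in>prime_factors n. real (multiplicity p n) * ln (real p))" by simp
  also have "\<dots> = (\<Sum>p\<in>prime_factors n. ln (real (p ^ multiplicity p n)))"
  proof (rule sum.cong)
    fix p assume "p \<in> prime_factors n"
    then have "real p > 0" by (simp add: in_prime_factors_iff prime_gt_0_nat)
    then show "real (multiplicity p n) * ln (real p) = ln (real (p ^ multiplicity p n))"
      by (simp add: ln_realpow)
  qed simp
  also have "\<dots> = ln (\<Prod>p\<in>prime_factors n. real (p ^ multiplicity p n))"
    by (rule ln_prod[symmetric]) (auto simp: in_prime_factors_iff prime_gt_0_nat)
  also have "\<dots> = ln (real n)"
    using prime_factorization_nat[OF n] by (metis of_nat_prod)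
  finally show ?thesis ..
qed

lemma lambda_F: "lambda_ap d A x = Fsum d A A x"
proof -
  let ?K = "Kset d A x"
  define h where "h z = (fst (fst z) ^ snd (fst z) * snd z, fst z)" for z :: "(nat \<times> nat) \<times> nat"
  have "lambda_ap d A x = (\<Sum>n\<in>?K. ln (real n))" unfolding lambda_ap_def Kset_def ..
  also have "\<dots> = (\<Sum>n\<in>?K. \<Sum>pr\<in>Dset n. ln (real (fst pr)))"
  proof (rule sum.cong)
    fix n assume "n \<in> ?K"
    then have "n > 0" unfolding Kset_def using S_pos by fastforce
    then show "ln (real n) = (\<Sum>pr\<in>Dset n. ln (real (fst pr)))" by (rule ln_decomp)
  qed simp
  also have "\<dots> = (\<Sum>w\<in>Sigma ?K Dset. ln (real (fst (snd w))))"
  proof (subst sum.Sigma)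
    show "finite ?K" by (rule finK)
    show "\<forall>n\<in>?K. finite (Dset n)"
    proof
      fix n assume "n \<in> ?K"
      then have "n > 0" unfolding Kset_def using S_pos by fastforce
      then show "finite (Dset n)" by (rule finD)
    qed
  qed (simp add: case_prod_beta)
  also have "Sigma ?K Dset = h ` Eset d A A x"
  proof (rule equalityI; rule subsetI)
    fix w assume w: "w \<in> Sigma ?K Dset"
    obtain n p r where ww: "w = (n, (p, r))" by (metis prod.collapse)
    have hh: "n \<in> S_ap d A" "real n \<le> x" "prime p" "r \<ge> 1" "p ^ r dvd n"
      using w unfolding ww Kset_def Dset_def by auto
    define k where "k = n div p ^ r"
    have nk: "n = p ^ r * k" unfolding k_def using hh(5) by simp
    have n1: "n \<ge> 1" using S_pos[OF hh(1)] .
    have SA: "\<forall>q. prime q \<longrightarrow> q dvd n \<longrightarrow> [int q = A] (mod d)" using hh(1) unfolding S_ap_def by auto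
    have "k \<noteq> 0" using n1 nk by (metis mult_0_right not_one_le_zero)
    moreover have "[int q = A] (mod d)" if "prime q" "q dvd k" for q
      using SA that nk by (metis dvd_mult2 dvd_mult_right mult.commute dvd_triv_right dvd_trans)
    ultimately have kS: "k \<in> S_ap d B" if "B = A" for B using that unfolding S_ap_def by auto
    have "p dvd p ^ r" using hh(4) by (simp add: dvd_power)
    then have pA: "[int p = A] (mod d)" using SA hh(3,5) dvd_trans by blast
    have "((p, r), k) \<in> Eset d A A x" unfolding Eset_def using hh pA kS nk by auto
    moreover have "w = h ((p, r), k)" unfolding h_def ww nk by simp
    ultimately show "w \<in> h ` Eset d A A x" by blast
  next
    fix w assume w: "w \<in> h ` Eset d A A x"
    then obtain p r k where ww: "w = h ((p, r), k)" and z: "((p, r), k) \<in> Eset d A A x" by force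
    have hh: "prime p" "r \<ge> 1" "[int p = A] (mod d)" "k \<in> S_ap d A" "real (p ^ r * k) \<le> x"
      using z unfolding Eset_def by auto
    have k1: "k \<ge> 1" using S_pos[OF hh(4)] .
    have "p ^ r * k \<ge> 1" using pow_bounds(3)[OF hh(1,2)] k1 by simp
    moreover have "[int q = A] (mod d)" if q: "prime q" "q dvd p ^ r * k" for q
    proof -
      have "q dvd p ^ r \<or> q dvd k" using q by (simp add: prime_dvd_mult_iff)
      then show ?thesis
      proof
        assume "q dvd p ^ r"
        then have "q dvd p" using q(1) prime_dvd_power by blast
        then have "q = p" using q(1) hh(1) by (simp add: primes_dvd_imp_eq)
        then show ?thesis using hh(3) by simp
      next
        assume "q dvd k"
        then show ?thesis using hh(4) q(1) unfolding S_ap_def by auto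
      qed
    qed
    ultimately have "p ^ r * k \<in> S_ap d A" unfolding S_ap_def by auto
    then show "w \<in> Sigma ?K Dset" unfolding ww h_def Kset_def Dset_def using hh by auto
  qed
  also have "(\<Sum>w\<in>h ` Eset d A A x. ln (real (fst (snd w)))) = (\<Sum>z\<in>Eset d A A x. ln (real (fst (fst z))))"
  proof (subst sum.reindex)
    show "inj_on h (Eset d A A x)"
    proof (rule inj_onI)
      fix z1 z2 assume z1: "z1 \<in> Eset d A A x" and z2: "z2 \<in> Eset d A A x" and e: "h z1 = h z2"
      then have f: "fst z1 = fst z2" unfolding h_def by simp
      have "prime (fst (fst z1))" using z1 unfolding Eset_def by auto
      then have "fst (fst z1) ^ snd (fst z1) > 0" by (simp add: prime_gt_0_nat)
      moreover have "fst (fst z1) ^ snd (fst z1) * snd z1 = fst (fst z1) ^ snd (fst z1) * snd z2"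
        using e f unfolding h_def by simp
      ultimately have "snd z1 = snd z2" by (metis mult_left_cancel less_irrefl)
      then show "z1 = z2" using f by (simp add: prod_eq_iff)
    qed
  qed (simp add: h_def)
  finally show ?thesis unfolding Fsum_def .
qed

lemma div_le_self_real: "0 \<le> (x::real) \<Longrightarrow> 1 \<le> c \<Longrightarrow> x / c \<le> x"
  using divide_left_mono[of 1 c x] by simp

theorem corollary2:
  fixes d a b :: int and x0 :: real
  assumes "d \<ge> 1"
    and "\<And>x. x \<le> x0 \<Longrightarrow> prime_count_ap d a x \<ge> prime_count_ap d b x"
    and "\<And>x. x \<le> x0 \<Longrightarrow> psi_ap d a x \<ge> psi_ap d b x"
  shows "\<forall>x. x \<le> x0 \<longrightarrow> lambda_ap d a x \<ge> lambda_ap d b x"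
proof (intro allI impI)
  fix x assume x: "x \<le> x0"
  have "Fsum d a b x \<le> Fsum d a a x"
    unfolding Fsum_T
  proof (rule sum_mono)
    fix pr assume pr: "pr \<in> Tset d a x"
    obtain p r where pp: "pr = (p, r)" by (metis prod.collapse)
    have h: "prime p" "r \<ge> 1" "real (p ^ r) \<le> x" using pr unfolding Tset_def pp by auto
    have c1: "real (p ^ r) \<ge> 1" using pow_bounds(3)[OF h(1,2)] by linarith
    then have "x / real (p ^ r) \<le> x" using h(3) by (intro div_le_self_real) linarith+
    then have le: "x / real (p ^ r) \<le> x0" using x by linarith
    have "card (Kset d b (x / real (p ^ r))) \<le> card (Kset d a (x / real (p ^ r)))"
      unfolding Kset_def by (rule count_le[OF assms(2) le])
    moreover have "ln (real p) \<ge> 0" using prime_gt_0_nat[OF h(1)] by simp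
    ultimately show "ln (real (fst pr)) * real (card (Kset d b (x / real (fst pr ^ snd pr))))
        \<le> ln (real (fst pr)) * real (card (Kset d a (x / real (fst pr ^ snd pr))))"
      unfolding pp by (simp add: mult_left_mono)
  qed
  moreover have "Fsum d b b x \<le> Fsum d a b x"
    unfolding Fsum_K
  proof (rule sum_mono)
    fix k assume k: "k \<in> Kset d b x"
    then have "k \<ge> 1" "real k \<le> x" unfolding Kset_def using S_pos by auto
    then have "x / real k \<le> x" by (intro div_le_self_real) auto
    then show "psi_ap d b (x / real k) \<le> psi_ap d a (x / real k)" using x assms(3) by simp
  qed
  ultimately show "lambda_ap d b x \<le> lambda_ap d a x" unfolding lambda_F by linarith
qed

end
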